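(* Let $\sigma$ be a 2-structure and $X\subsetneq V(\sigma)$ with $\sigma[X]$ prime; write $\overline{X}=V(\sigma)\setminus X$. Suppose Statement (S3) holds (there is no $Y\subseteq\overline{X}$ with $|Y|=3$ and $\sigma[X\cup Y]$ prime). Let $e,f\in E(\sigma)$ be distinct and $\alpha\in X$. If the outside graph $\Gamma_{(\sigma,\overline{X})}$ has no isolated vertices, then: (1) if $\langle X\rangle^{(e,f)}_\sigma\neq\emptyset$ and $\langle X\rangle^{(f,e)}_\sigma\neq\emptyset$, then $(x,y)\in e$ and $(y,x)\in f$ for all $x\in\langle X\rangle^{(e,f)}_\sigma$ and $y\in\langle X\rangle^{(f,e)}_\sigma$; (2) if $X^{(e,f)}_\sigma(\alpha)\neq\emptyset$ and $X^{(f,e)}_\sigma(\alpha)\neq\emptyset$, then $(x,y)\in e$ and $(y,x)\in f$ for all $x\in X^{(e,f)}_\sigma(\alpha)$ and $y\in X^{(f,e)}_\sigma(\alpha)$.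
   Context: A 2-structure $\sigma$ consists of a vertex set $V(\sigma)$ and an equivalence relation $\equiv_\sigma$ on ordered pairs of distinct vertices; $E(\sigma)$ is its set of classes; $\sigma[W]$ is the induced 2-structure on $W$. A module is a set $M$ such that for all $x,y\in M$ and $v\notin M$, $(x,v)\equiv_\sigma(y,v)$ and $(v,x)\equiv_\sigma(v,y)$; $\sigma$ is prime if $|V(\sigma)|\geq3$ and its only modules are $\emptyset$, $V(\sigma)$ and singletons. Given $\sigma[X]$ prime: $\langle X\rangle_\sigma=\{v\in\overline{X}: X\text{ is a module of }\sigma[X\cup\{v\}]\}$; for $\alpha\in X$, $X_\sigma(\alpha)=\{v\in\overline{X}:\{\alpha,v\}\text{ is a module of }\sigma[X\cup\{v\}]\}$. For $e,f\in E(\sigma)$: $\langle X\rangle^{(e,f)}_\sigma=\{v\in\langle X\rangle_\sigma:(v,\beta)\in e,(\beta,v)\in f\}$ for any $\beta\in X$; $X^{(e,f)}_\sigma(\alpha)=\{v\in X_\sigma(\alpha):(v,\alpha)\in e,(\alpha,v)\in f\}$. The outside graph $\Gamma_{(\sigma,\overline{X})}$ has vertex set $\overline{X}$ and edges the 2-element sets $Y\subseteq\overline{X}$ with $\sigma[X\cup Y]$ prime. *)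

theory Defs
  imports Main
begin

definition pairs :: "'a set \<Rightarrow> ('a \<times> 'a) set" where
  "pairs V = {(x, y). x \<in> V \<and> y \<in> V \<and> x \<noteq> y}"

definition two_structure :: "'a set \<Rightarrow> (('a \<times> 'a) \<times> ('a \<times> 'a)) set \<Rightarrow> bool" where
  "two_structure V R \<longleftrightarrow> equiv (pairs V) R"

definition classes :: "'a set \<Rightarrow> (('a \<times> 'a) \<times> ('a \<times> 'a)) set \<Rightarrow> ('a \<times> 'a) set set" where
  "classes V R = pairs V // R"

definition induced :: "(('a \<times> 'a) \<times> ('a \<times> 'a)) set \<Rightarrow> 'a set \<Rightarrow> (('a \<times> 'a) \<times> ('a \<times> 'a)) set" where
  "induced R W = R \<inter> (pairs W \<times> pairs W)"

definition is_module :: "'a set \<Rightarrow> (('a \<times> 'a) \<times> ('a \<times> 'a)) set \<Rightarrow> 'a set \<Rightarrow> bool" where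
  "is_module V R M \<longleftrightarrow> M \<subseteq> V \<and>
     (\<forall>x\<in>M. \<forall>y\<in>M. \<forall>v\<in>V - M. ((x, v), (y, v)) \<in> R \<and> ((v, x), (v, y)) \<in> R)"

definition prime_ts :: "'a set \<Rightarrow> (('a \<times> 'a) \<times> ('a \<times> 'a)) set \<Rightarrow> bool" where
  "prime_ts V R \<longleftrightarrow> (infinite V \<or> card V \<ge> 3) \<and>
     (\<forall>M. is_module V R M \<longrightarrow> M = {} \<or> M = V \<or> (\<exists>x. M = {x}))"

definition prime_on :: "'a set \<Rightarrow> (('a \<times> 'a) \<times> ('a \<times> 'a)) set \<Rightarrow> 'a set \<Rightarrow> bool" where
  "prime_on V R W \<longleftrightarrow> W \<subseteq> V \<and> prime_ts W (induced R W)"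

definition angle :: "'a set \<Rightarrow> (('a \<times> 'a) \<times> ('a \<times> 'a)) set \<Rightarrow> 'a set \<Rightarrow> 'a set" where
  "angle V R X = {v \<in> V - X. is_module (X \<union> {v}) (induced R (X \<union> {v})) X}"

definition Xalpha :: "'a set \<Rightarrow> (('a \<times> 'a) \<times> ('a \<times> 'a)) set \<Rightarrow> 'a set \<Rightarrow> 'a \<Rightarrow> 'a set" where
  "Xalpha V R X \<alpha> = {v \<in> V - X. is_module (X \<union> {v}) (induced R (X \<union> {v})) {\<alpha>, v}}"

text \<open>Angle X^(e,f): members v of angle X with (v,beta) in e and (beta,v) in f, for
(any, equivalently every) beta in X.\<close>
definition angle_ef :: "'a set \<Rightarrow> (('a \<times> 'a) \<times> ('a \<times> 'a)) set \<Rightarrow> 'a set \<Rightarrow>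
     ('a \<times> 'a) set \<Rightarrow> ('a \<times> 'a) set \<Rightarrow> 'a set" where
  "angle_ef V R X e f = {v \<in> angle V R X. \<forall>\<beta>\<in>X. (v, \<beta>) \<in> e \<and> (\<beta>, v) \<in> f}"

definition Xalpha_ef :: "'a set \<Rightarrow> (('a \<times> 'a) \<times> ('a \<times> 'a)) set \<Rightarrow> 'a set \<Rightarrow> 'a \<Rightarrow>
     ('a \<times> 'a) set \<Rightarrow> ('a \<times> 'a) set \<Rightarrow> 'a set" where
  "Xalpha_ef V R X \<alpha> e f = {v \<in> Xalpha V R X \<alpha>. (v, \<alpha>) \<in> e \<and> (\<alpha>, v) \<in> f}"

definition outside_edge :: "'a set \<Rightarrow> (('a \<times> 'a) \<times> ('a \<times> 'a)) set \<Rightarrow> 'a set \<Rightarrow> 'a \<Rightarrow> 'a \<Rightarrow> bool" where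
  "outside_edge V R X u w \<longleftrightarrow> u \<in> V - X \<and> w \<in> V - X \<and> u \<noteq> w \<and> prime_on V R (X \<union> {u, w})"

end

theory Submission
  imports Defs
begin


definition modl :: "(('a \<times> 'a) \<times> ('a \<times> 'a)) set \<Rightarrow> 'a set \<Rightarrow> 'a set \<Rightarrow> bool" where
  "modl R T M \<longleftrightarrow> M \<subseteq> T \<and> (\<forall>a\<in>M. \<forall>b\<in>M. \<forall>v\<in>T-M. ((a,v),(b,v))\<in>R \<and> ((v,a),(v,b))\<in>R)"

lemma R_sub: "equiv (pairs V) R \<Longrightarrow> R \<subseteq> pairs V \<times> pairs V"
  by (simp add: equiv_def refl_on_def)

lemma is_module_modl:
  assumes "equiv (pairs V) R" "T \<subseteq> V"
  shows "is_module T (induced R T) M \<longleftrightarrow> modl R T M"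
  using R_sub[OF assms(1)] assms(2) unfolding is_module_def modl_def induced_def pairs_def
  by blast

lemma prime_on_modl:
  assumes "equiv (pairs V) R"
  shows "prime_on V R W \<longleftrightarrow> W \<subseteq> V \<and> (infinite W \<or> card W \<ge> 3) \<and>
     (\<forall>M. modl R W M \<longrightarrow> M = {} \<or> M = W \<or> (\<exists>x. M = {x}))"
  unfolding prime_on_def prime_ts_def using is_module_modl[OF assms] by blast

lemma third:
  assumes "infinite A \<or> 3 \<le> card A"
  shows "\<exists>d\<in>A. d \<noteq> a \<and> d \<noteq> b"
proof (rule ccontr)
  assume "\<not> ?thesis"
  then have "A \<subseteq> {a,b}" by blast
  then have "finite A" "card A \<le> card {a,b}" by (auto intro: finite_subset card_mono)
  moreover have "card {a,b} \<le> 2" by (simp add: card_insert_le_m1)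
  ultimately show False using assms by linarith
qed

lemma nonprime:
  assumes "equiv (pairs V) R" "prime_on V R W" "modl R W M" "a \<in> M" "b \<in> M" "a \<noteq> b"
    "c \<in> W" "c \<notin> M"
  shows False
  using assms prime_on_modl[OF assms(1)] by blast

lemma modl_restrict: "modl R T M \<Longrightarrow> S \<subseteq> T \<Longrightarrow> modl R S (M \<inter> S)"
  unfolding modl_def by blast

lemma extend:
  assumes eq: "equiv (pairs V) R" and W: "prime_on V R W" and v: "v \<in> V" "v \<notin> W"
    and np: "\<not> prime_on V R (insert v W)"
  shows "modl R (insert v W) W \<or> (\<exists>\<gamma>\<in>W. modl R (insert v W) {\<gamma>, v})"
proof -
  have WV: "W \<subseteq> V" and sz: "infinite W \<or> card W \<ge> 3"
    and Wm: "\<forall>M. modl R W M \<longrightarrow> M = {} \<or> M = W \<or> (\<exists>x. M = {x})"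
    using W prime_on_modl[OF eq] by auto
  have sz': "infinite (insert v W) \<or> card (insert v W) \<ge> 3"
    using sz v by auto
  obtain M where M: "modl R (insert v W) M" "M \<noteq> {}" "M \<noteq> insert v W" "\<forall>x. M \<noteq> {x}"
    using np sz' WV v prime_on_modl[OF eq] by auto
  have "modl R W (M \<inter> W)" using modl_restrict[OF M(1)] by blast
  then have c: "M \<inter> W = {} \<or> M \<inter> W = W \<or> (\<exists>x. M \<inter> W = {x})" using Wm by blast
  have Ms: "M \<subseteq> insert v W" using M(1) unfolding modl_def by blast
  show ?thesis
  proof -
    { assume "M \<inter> W = {}"
      then have "M \<subseteq> {v}" using Ms by blast
      then have False using M by (metis subset_singletonD) }
    moreover
    { assume "M \<inter> W = W"
      then have "M = W" using Ms M(3) v by blast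
      then have ?thesis using M by blast }
    moreover
    { fix g assume g: "M \<inter> W = {g}"
      then have "M \<subseteq> {g, v}" "g \<in> W" using Ms by blast+
      moreover have "v \<in> M" using g M(4) Ms by (metis Int_absorb2 insert_absorb subset_insert)
      ultimately have "M = {g, v}" using g by blast
      then have ?thesis using M \<open>g \<in> W\<close> by blast }
    ultimately show ?thesis using c by blast
  qed
qed



lemma modlD: "modl R T M \<Longrightarrow> a\<in>M \<Longrightarrow> b\<in>M \<Longrightarrow> v\<in>T \<Longrightarrow> v\<notin>M \<Longrightarrow> ((a,v),(b,v))\<in>R \<and> ((v,a),(v,b))\<in>R"
  unfolding modl_def by blast

lemma modlI: "M \<subseteq> T \<Longrightarrow> (\<And>a b v. a\<in>M \<Longrightarrow> b\<in>M \<Longrightarrow> v\<in>T - M \<Longrightarrow> ((a,v),(b,v))\<in>R \<and> ((v,a),(v,b))\<in>R) \<Longrightarrow> modl R T M"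
  unfolding modl_def by blast

lemma eqv_sym: "equiv A R \<Longrightarrow> (p,q)\<in>R \<Longrightarrow> (q,p)\<in>R"
  by (meson equivE symD)
lemma eqv_trans: "equiv A R \<Longrightarrow> (p,q)\<in>R \<Longrightarrow> (q,r)\<in>R \<Longrightarrow> (p,r)\<in>R"
  by (meson equivE transD)
lemma eqv_refl: "equiv (pairs V) R \<Longrightarrow> a\<in>V \<Longrightarrow> b\<in>V \<Longrightarrow> a\<noteq>b \<Longrightarrow> ((a,b),(a,b))\<in>R"
  unfolding equiv_def refl_on_def pairs_def by blast
lemma cls_R: "equiv A R \<Longrightarrow> e \<in> A // R \<Longrightarrow> p\<in>e \<Longrightarrow> (p,q)\<in>R \<Longrightarrow> q\<in>e"
  by (metis equiv_class_eq quotientE Image_singleton_iff equiv_class_self)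
lemma cls_R2: "equiv A R \<Longrightarrow> e \<in> A // R \<Longrightarrow> p\<in>e \<Longrightarrow> q\<in>e \<Longrightarrow> (p,q)\<in>R"
  by (meson quotient_eq_iff)
lemma cls_disj: "equiv A R \<Longrightarrow> e \<in> A // R \<Longrightarrow> f \<in> A // R \<Longrightarrow> e \<noteq> f \<Longrightarrow> p\<in>e \<Longrightarrow> p\<notin>f"
  using quotient_disj by blast

theorem lemma3p7:
  fixes V :: "'a set" and R :: "(('a \<times> 'a) \<times> ('a \<times> 'a)) set"
    and X :: "'a set" and e f :: "('a \<times> 'a) set" and \<alpha> :: 'a
  assumes ts: "two_structure V R"
    and XV: "X \<subset> V"
    and Xprime: "prime_on V R X"
    and S3: "\<not> (\<exists>Y. Y \<subseteq> V - X \<and> card Y = 3 \<and> prime_on V R (X \<union> Y))"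
    and e: "e \<in> classes V R" and f: "f \<in> classes V R" and ef: "e \<noteq> f"
    and \<alpha>: "\<alpha> \<in> X"
    and noiso: "\<forall>u \<in> V - X. \<exists>w. outside_edge V R X u w"
  shows "(angle_ef V R X e f \<noteq> {} \<and> angle_ef V R X f e \<noteq> {} \<longrightarrow>
           (\<forall>x \<in> angle_ef V R X e f. \<forall>y \<in> angle_ef V R X f e. (x, y) \<in> e \<and> (y, x) \<in> f))
       \<and> (Xalpha_ef V R X \<alpha> e f \<noteq> {} \<and> Xalpha_ef V R X \<alpha> f e \<noteq> {} \<longrightarrow>
           (\<forall>x \<in> Xalpha_ef V R X \<alpha> e f. \<forall>y \<in> Xalpha_ef V R X \<alpha> f e. (x, y) \<in> e \<and> (y, x) \<in> f))"
proof -
  have eq: "equiv (pairs V) R" using ts unfolding two_structure_def .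
  note sR = eqv_sym[OF eq] and tR = eqv_trans[OF eq]
  have eR: "\<And>p q. p\<in>e \<Longrightarrow> (p,q)\<in>R \<Longrightarrow> q\<in>e" "\<And>p q. p\<in>e \<Longrightarrow> (q,p)\<in>R \<Longrightarrow> q\<in>e"
    using cls_R[OF eq e[unfolded classes_def]] sR by blast+
  have fR: "\<And>p q. p\<in>f \<Longrightarrow> (p,q)\<in>R \<Longrightarrow> q\<in>f" "\<And>p q. p\<in>f \<Longrightarrow> (q,p)\<in>R \<Longrightarrow> q\<in>f"
    using cls_R[OF eq f[unfolded classes_def]] sR by blast+
  have eR2: "\<And>p q. p\<in>e \<Longrightarrow> q\<in>e \<Longrightarrow> (p,q)\<in>R"
    using cls_R2[OF eq e[unfolded classes_def]] by blast
  have fR2: "\<And>p q. p\<in>f \<Longrightarrow> q\<in>f \<Longrightarrow> (p,q)\<in>R"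
    using cls_R2[OF eq f[unfolded classes_def]] by blast
  have disj: "\<And>p. p\<in>e \<Longrightarrow> p\<in>f \<Longrightarrow> False"
    using cls_disj[OF eq e[unfolded classes_def] f[unfolded classes_def] ef] by blast
  have XsV: "X \<subseteq> V" and Xsz: "infinite X \<or> card X \<ge> 3"
    and Xm: "\<forall>M. modl R X M \<longrightarrow> M = {} \<or> M = X \<or> (\<exists>x. M = {x})"
    using Xprime prime_on_modl[OF eq] by auto
  obtain \<beta>1 where b1: "\<beta>1 \<in> X" "\<beta>1 \<noteq> \<alpha>" using third[OF Xsz] by blast
  have S3': "\<not> prime_on V R (insert x (X \<union> {y, z}))"
    if "x \<in> V - X" "y \<in> V - X" "z \<in> V - X" "x \<noteq> y" "x \<noteq> z" "y \<noteq> z" for x y z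
  proof -
    have "card {x,y,z} = 3" using that by simp
    moreover have "{x,y,z} \<subseteq> V - X" using that by blast
    moreover have "X \<union> {x,y,z} = insert x (X \<union> {y, z})" by blast
    ultimately show ?thesis using S3 by metis
  qed
  have P1: "\<forall>x \<in> angle_ef V R X e f. \<forall>y \<in> angle_ef V R X f e. (x, y) \<in> e \<and> (y, x) \<in> f"
  proof (intro ballI)
    fix x y assume x: "x \<in> angle_ef V R X e f" and y: "y \<in> angle_ef V R X f e"
    have xV: "x \<in> V - X" and xe: "\<forall>\<beta>\<in>X. (x,\<beta>)\<in>e \<and> (\<beta>,x)\<in>f"
      using x unfolding angle_ef_def angle_def by auto
    have yV: "y \<in> V - X" and ye: "\<forall>\<beta>\<in>X. (y,\<beta>)\<in>f \<and> (\<beta>,y)\<in>e"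
      using y unfolding angle_ef_def angle_def by auto
    obtain z where z: "z \<in> V - X" "z \<noteq> y" and W: "prime_on V R (X \<union> {y, z})"
      using noiso yV unfolding outside_edge_def by blast
    have xy: "x \<noteq> y" using xe ye \<alpha> disj by blast
    have XmodG: "modl R (X \<union> {y, x}) X"
      unfolding modl_def using xe ye eR2 fR2 by blast
    have zx: "z \<noteq> x"
    proof
      assume "z = x"
      then have "prime_on V R (X \<union> {y, x})" using W by simp
      then show False using nonprime[OF eq _ XmodG \<alpha> b1(1) b1(2)[symmetric], of y] yV by blast
    qed
    have np: "\<not> prime_on V R (insert x (X \<union> {y, z}))" using S3'[OF xV yV z(1) xy zx[symmetric] z(2)[symmetric]] .
    have xW: "x \<notin> X \<union> {y, z}" using xV xy zx by blast
    from extend[OF eq W _ xW np] xV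
    consider (A) "modl R (insert x (X \<union> {y, z})) (X \<union> {y, z})"
      | (B) \<gamma> where "\<gamma> \<in> X \<union> {y, z}" "modl R (insert x (X \<union> {y, z})) {\<gamma>, x}" by blast
    then show "(x, y) \<in> e \<and> (y, x) \<in> f"
    proof cases
      case A
      then have "((x,\<alpha>),(x,y))\<in>R" "((\<alpha>,x),(y,x))\<in>R" using modlD[OF A, of \<alpha> y x] \<alpha> xy xW by auto
      then show ?thesis using xe \<alpha> eR fR by blast
    next
      case (B \<gamma>)
      consider "\<gamma> \<in> X" | "\<gamma> = y" | "\<gamma> = z" using B(1) by blast
      then show ?thesis
      proof cases
        case 1
        then have "((\<gamma>,y),(x,y))\<in>R" "((y,\<gamma>),(y,x))\<in>R" using modlD[OF B(2), of \<gamma> x y] xy yV 1 by auto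
        then show ?thesis using ye 1 eR fR by blast
      next
        case 2
        then have "((y,\<alpha>),(x,\<alpha>))\<in>R" using modlD[OF B(2), of y x \<alpha>] \<alpha> xV yV 2 by auto
        then show ?thesis using xe ye \<alpha> fR disj by blast
      next
        case 3
        have "modl R (X \<union> {y, z}) X"
        proof (rule modlI)
          show "X \<subseteq> X \<union> {y, z}" by blast
          fix a b v assume a: "a \<in> X" and b: "b \<in> X" and v: "v \<in> X \<union> {y, z} - X"
          show "((a, v), b, v) \<in> R \<and> ((v, a), v, b) \<in> R"
          proof (cases "v = y")
            case True then show ?thesis using ye a b eR2 fR2 by blast
          next
            case False
            then have vz: "v = z" using v by blast
            have "((a,z),(a,x))\<in>R" "((z,a),(x,a))\<in>R" "((b,z),(b,x))\<in>R" "((z,b),(x,b))\<in>R"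
              using modlD[OF B(2), of z x a] modlD[OF B(2), of z x b] 3 a b xV z by auto
            moreover have "((a,x),(b,x))\<in>R" "((x,a),(x,b))\<in>R" using xe a b eR2 fR2 by blast+
            ultimately show ?thesis using vz sR tR by meson
          qed
        qed
        then show ?thesis using nonprime[OF eq W _ \<alpha> b1(1) b1(2)[symmetric], of y] yV by blast
      qed
    qed
  qed
  have P2: "\<forall>x \<in> Xalpha_ef V R X \<alpha> e f. \<forall>y \<in> Xalpha_ef V R X \<alpha> f e. (x, y) \<in> e \<and> (y, x) \<in> f"
  proof (intro ballI)
    fix x y assume x: "x \<in> Xalpha_ef V R X \<alpha> e f" and y: "y \<in> Xalpha_ef V R X \<alpha> f e"
    have xV: "x \<in> V - X" and xe: "(x,\<alpha>)\<in>e" "(\<alpha>,x)\<in>f"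
      and xm: "modl R (X \<union> {x}) {\<alpha>, x}"
      using x XsV \<alpha> is_module_modl[OF eq, of "X \<union> {x}"] unfolding Xalpha_ef_def Xalpha_def by auto
    have yV: "y \<in> V - X" and ye: "(y,\<alpha>)\<in>f" "(\<alpha>,y)\<in>e"
      and ym: "modl R (X \<union> {y}) {\<alpha>, y}"
      using y XsV \<alpha> is_module_modl[OF eq, of "X \<union> {y}"] unfolding Xalpha_ef_def Xalpha_def by auto
    have xm': "((\<alpha>,v),(x,v))\<in>R \<and> ((v,\<alpha>),(v,x))\<in>R" if "v \<in> X" "v \<noteq> \<alpha>" for v
      using modlD[OF xm, of \<alpha> x v] that xV by auto
    have ym': "((\<alpha>,v),(y,v))\<in>R \<and> ((v,\<alpha>),(v,y))\<in>R" if "v \<in> X" "v \<noteq> \<alpha>" for v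
      using modlD[OF ym, of \<alpha> y v] that yV by auto
    obtain z where z: "z \<in> V - X" "z \<noteq> y" and W: "prime_on V R (X \<union> {y, z})"
      using noiso yV unfolding outside_edge_def by blast
    have xy: "x \<noteq> y" using xe ye disj by blast
    have aV: "\<alpha> \<in> V" using \<alpha> XsV by blast
    have XmodG: "modl R (X \<union> {y, x}) {\<alpha>, x, y}"
    proof (rule modlI)
      show "{\<alpha>, x, y} \<subseteq> X \<union> {y, x}" using \<alpha> by blast
      fix a b v assume a: "a \<in> {\<alpha>, x, y}" and b: "b \<in> {\<alpha>, x, y}" and v: "v \<in> X \<union> {y, x} - {\<alpha>, x, y}"
      have vX: "v \<in> X" "v \<noteq> \<alpha>" using v by auto
      have vV: "v \<in> V" using vX XsV by blast
      have toA: "((c,v),(\<alpha>,v))\<in>R \<and> ((v,c),(v,\<alpha>))\<in>R" if "c \<in> {\<alpha>, x, y}" for c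
        using that eqv_refl[OF eq aV vV] eqv_refl[OF eq vV aV] vX xm'[OF vX] ym'[OF vX] sR by blast
      show "((a, v), b, v) \<in> R \<and> ((v, a), v, b) \<in> R"
        using toA[OF a] toA[OF b] sR tR by meson
    qed
    have zx: "z \<noteq> x"
    proof
      assume "z = x"
      then have "prime_on V R (X \<union> {y, x})" using W by simp
      moreover have "\<alpha> \<noteq> x" using \<alpha> xV by blast
      ultimately show False using nonprime[OF eq _ XmodG, of \<alpha> x \<beta>1] b1 xV yV by blast
    qed
    have np: "\<not> prime_on V R (insert x (X \<union> {y, z}))" using S3'[OF xV yV z(1) xy zx[symmetric] z(2)[symmetric]] .
    have xW: "x \<notin> X \<union> {y, z}" using xV xy zx by blast
    from extend[OF eq W _ xW np] xV
    consider (A) "modl R (insert x (X \<union> {y, z})) (X \<union> {y, z})"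
      | (B) \<gamma> where "\<gamma> \<in> X \<union> {y, z}" "modl R (insert x (X \<union> {y, z})) {\<gamma>, x}" by blast
    then show "(x, y) \<in> e \<and> (y, x) \<in> f"
    proof cases
      case A
      then have "((\<alpha>,x),(y,x))\<in>R \<and> ((x,\<alpha>),(x,y))\<in>R" using modlD[OF A, of \<alpha> y x] \<alpha> xW by auto
      then show ?thesis using xe eR fR by blast
    next
      case (B \<gamma>)
      consider "\<gamma> = \<alpha>" | "\<gamma> \<in> X" "\<gamma> \<noteq> \<alpha>" | "\<gamma> = y" | "\<gamma> = z" using B(1) by blast
      then show ?thesis
      proof cases
        case 1
        then have "((\<alpha>,y),(x,y))\<in>R \<and> ((y,\<alpha>),(y,x))\<in>R" using modlD[OF B(2), of \<alpha> x y] xy yV \<alpha> by auto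
        then show ?thesis using ye eR fR by blast
      next
        case 2
        have gm: "modl R X {\<alpha>, \<gamma>}"
        proof (rule modlI)
          show "{\<alpha>, \<gamma>} \<subseteq> X" using \<alpha> 2 by blast
          fix a b v assume a: "a \<in> {\<alpha>, \<gamma>}" and b: "b \<in> {\<alpha>, \<gamma>}" and v: "v \<in> X - {\<alpha>, \<gamma>}"
          have toX: "((c,v),(x,v))\<in>R \<and> ((v,c),(v,x))\<in>R" if "c \<in> {\<alpha>, \<gamma>}" for c
            using that xm'[of v] v modlD[OF B(2), of \<gamma> x v] xV by auto
          show "((a, v), b, v) \<in> R \<and> ((v, a), v, b) \<in> R"
            using toX[OF a] toX[OF b] sR tR by meson
        qed
        obtain d where "d \<in> X" "d \<noteq> \<alpha>" "d \<noteq> \<gamma>" using third[OF Xsz] by blast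
        then show ?thesis using nonprime[OF eq Xprime gm, of \<alpha> \<gamma> d] 2 by blast
      next
        case 3
        then have "((\<alpha>,y),(\<alpha>,x))\<in>R" using modlD[OF B(2), of y x \<alpha>] \<alpha> xV yV by auto
        then show ?thesis using xe ye eR disj by blast
      next
        case 4
        have gm: "modl R (X \<union> {y, z}) {\<alpha>, y, z}"
        proof (rule modlI)
          show "{\<alpha>, y, z} \<subseteq> X \<union> {y, z}" using \<alpha> by blast
          fix a b v assume a: "a \<in> {\<alpha>, y, z}" and b: "b \<in> {\<alpha>, y, z}" and v: "v \<in> X \<union> {y, z} - {\<alpha>, y, z}"
          have vX: "v \<in> X" "v \<noteq> \<alpha>" using v by auto
          have vV: "v \<in> V" using vX XsV by blast
          have zz: "((z,v),(x,v))\<in>R \<and> ((v,z),(v,x))\<in>R"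
            using modlD[OF B(2), of z x v] 4 v xV by auto
          have toA: "((c,v),(\<alpha>,v))\<in>R \<and> ((v,c),(v,\<alpha>))\<in>R" if "c \<in> {\<alpha>, y, z}" for c
          proof -
            have "c = \<alpha> \<or> c = y \<or> c = z" using that by blast
            then show ?thesis
              using eqv_refl[OF eq aV vV] eqv_refl[OF eq vV aV] xm'[OF vX] ym'[OF vX] zz sR tR by meson
          qed
          show "((a, v), b, v) \<in> R \<and> ((v, a), v, b) \<in> R"
            using toA[OF a] toA[OF b] sR tR by meson
        qed
        have "\<alpha> \<noteq> y" using \<alpha> yV by blast
        then show ?thesis using nonprime[OF eq W gm, of \<alpha> y \<beta>1] b1 yV z by blast
      qed
    qed
  qed
  show ?thesis using P1 P2 by blast
qed

end
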